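(* Let $\mathcal A\in\mathbb C^{n_1\times n_2\times n_3}$, $\mathcal A^-\in\mathcal A\{1\}$ and $\mathcal X\in\mathbb C^{n_2\times n_1\times n_3}$. The following are equivalent: (a) $\mathcal X=\mathcal A^-\mathcal A\mathcal A^*$; (b) $\mathcal X\mathcal A\mathcal A^\dagger=\mathcal X$ and $\mathcal X(\mathcal A^\dagger)^*=\mathcal A^-\mathcal A$; (c) $\mathcal X\mathcal A\mathcal A^\dagger=\mathcal X$ and $\mathcal X\mathcal A=\mathcal A^-\mathcal A\mathcal A^*\mathcal A$; (d) $\mathcal A^-\mathcal A\mathcal X\mathcal A\mathcal A^\dagger=\mathcal X$ and $\mathcal A\mathcal X(\mathcal A^\dagger)^*=\mathcal A$.
   Context: Fix a nonsingular matrix $M\in\mathbb C^{n_3\times n_3}$. For $\mathcal C\in\mathbb C^{n_1\times n_2\times n_3}$ let $\widehat{\mathcal C}=\mathcal C\times_3M$, i.e. $\widehat{\mathcal C}_{ijk}=\sum_{l=1}^{n_3}M_{kl}\mathcal C_{ijl}$, and let $\widehat{\mathcal C}^{(i)}$ denote its $i$-th frontal slice. The M-product $\mathcal C\star_M\mathcal D$ of $\mathcal C\in\mathbb C^{n_1\times n_2\times n_3}$ and $\mathcal D\in\mathbb C^{n_2\times l\times n_3}$ is the unique tensor with $\widehat{\mathcal C\star_M\mathcal D}^{(i)}=\widehat{\mathcal C}^{(i)}\widehat{\mathcal D}^{(i)}$ for all $i\in[n_3]$. Juxtaposition of tensors denotes the M-product. The conjugate transpose $\mathcal A^*$ is defined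 by $\widehat{\mathcal A^*}^{(i)}=(\widehat{\mathcal A}^{(i)})^*$. The Moore–Penrose inverse $\mathcal A^\dagger$ is the unique $\mathcal W$ satisfying $\mathcal A\mathcal W\mathcal A=\mathcal A$, $\mathcal W\mathcal A\mathcal W=\mathcal W$, $(\mathcal A\mathcal W)^*=\mathcal A\mathcal W$, $(\mathcal W\mathcal A)^*=\mathcal W\mathcal A$. $\mathcal A\{1\}$ is the set of all $\mathcal W$ with $\mathcal A\mathcal W\mathcal A=\mathcal A$. *)

theory Defs
  imports "Jordan_Normal_Form.Matrix" "Jordan_Normal_Form.Determinant"
begin

text \<open>Third-order complex tensors are represented as functions
  nat => nat => nat => complex; a tensor lies in C^(n1 x n2 x n3) iff it
  vanishes outside the index box. The transform matrix M is a complex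
  n3 x n3 matrix (n3 = dim_row M).\<close>

type_synonym tensor = "nat \<Rightarrow> nat \<Rightarrow> nat \<Rightarrow> complex"

definition tensor_in :: "nat \<Rightarrow> nat \<Rightarrow> nat \<Rightarrow> tensor \<Rightarrow> bool" where
  "tensor_in n1 n2 n3 A \<longleftrightarrow>
     (\<forall>i j k. (n1 \<le> i \<or> n2 \<le> j \<or> n3 \<le> k) \<longrightarrow> A i j k = 0)"

definition tensor_hat :: "complex mat \<Rightarrow> tensor \<Rightarrow> tensor" where
  "tensor_hat M C = (\<lambda>i j k. if k < dim_row M
      then (\<Sum>l<dim_row M. M $$ (k, l) * C i j l) else 0)"

text \<open>M-product of C (n1 x n x n3) and D (n x l x n3): the unique tensor
  whose transformed frontal slices are the products of the transformed slices.
  The argument n is the inner dimension.\<close>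
definition mprod :: "complex mat \<Rightarrow> nat \<Rightarrow> tensor \<Rightarrow> tensor \<Rightarrow> tensor" where
  "mprod M n C D = (THE W. (\<forall>i j k. dim_row M \<le> k \<longrightarrow> W i j k = 0) \<and>
      (\<forall>i j k. k < dim_row M \<longrightarrow>
         tensor_hat M W i j k = (\<Sum>t<n. tensor_hat M C i t k * tensor_hat M D t j k)))"

definition tconj :: "complex mat \<Rightarrow> tensor \<Rightarrow> tensor" where
  "tconj M A = (THE W. (\<forall>i j k. dim_row M \<le> k \<longrightarrow> W i j k = 0) \<and>
      (\<forall>i j k. k < dim_row M \<longrightarrow> tensor_hat M W i j k = cnj (tensor_hat M A j i k)))"

definition mp_inv :: "complex mat \<Rightarrow> nat \<Rightarrow> nat \<Rightarrow> tensor \<Rightarrow> tensor" where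
  "mp_inv M n1 n2 A = (THE W. tensor_in n2 n1 (dim_row M) W \<and>
      mprod M n1 (mprod M n2 A W) A = A \<and>
      mprod M n2 (mprod M n1 W A) W = W \<and>
      tconj M (mprod M n2 A W) = mprod M n2 A W \<and>
      tconj M (mprod M n1 W A) = mprod M n1 W A)"

definition inner1 :: "complex mat \<Rightarrow> nat \<Rightarrow> nat \<Rightarrow> tensor \<Rightarrow> tensor set" where
  "inner1 M n1 n2 A = {W. tensor_in n2 n1 (dim_row M) W \<and>
      mprod M n1 (mprod M n2 A W) A = A}"

end

theory Submission
  imports Defs
begin


type_synonym fm = "nat \<Rightarrow> nat \<Rightarrow> complex"

definition mm :: "nat \<Rightarrow> fm \<Rightarrow> fm \<Rightarrow> fm" where
  "mm k F G = (\<lambda>i j. \<Sum>t<k. F i t * G t j)"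
definition ad :: "fm \<Rightarrow> fm" where "ad F = (\<lambda>i j. cnj (F j i))"
definition boxed :: "nat \<Rightarrow> nat \<Rightarrow> fm \<Rightarrow> bool" where
  "boxed a b F \<longleftrightarrow> (\<forall>i j. (a \<le> i \<or> b \<le> j) \<longrightarrow> F i j = 0)"

lemma mm_assoc: "mm l (mm k A B) C = mm k A (mm l B C)"
  by (auto simp: mm_def sum_distrib_left sum_distrib_right mult.assoc intro!: ext
      intro: sum.swap)

lemma ad_mm: "ad (mm k F G) = mm k (ad G) (ad F)"
  by (auto simp: mm_def ad_def cnj_sum mult.commute intro!: ext)

lemma ad_ad[simp]: "ad (ad F) = F" by (simp add: ad_def)

lemma boxed_mm: "boxed a c F \<Longrightarrow> boxed c b G \<Longrightarrow> boxed a b (mm k F G)"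
  by (auto simp: boxed_def mm_def)
lemma boxed_ad: "boxed a b F \<Longrightarrow> boxed b a (ad F)"
  by (auto simp: boxed_def ad_def)

lemma mm_diff: "mm k F (\<lambda>i j. G i j - H i j) = (\<lambda>i j. mm k F G i j - mm k F H i j)"
  by (auto simp: mm_def right_diff_distrib sum_subtractf intro!: ext)



lemma mm_add: "mm k F (\<lambda>i j. G i j + H i j) = (\<lambda>i j. mm k F G i j + mm k F H i j)"
  by (auto simp: mm_def distrib_left sum.distrib intro!: ext)

lemma inv13: "boxed n m A \<Longrightarrow> \<exists>G. boxed m n G \<and> mm n (mm m A G) A = A \<and> ad (mm m A G) = mm m A G"
proof (induction m arbitrary: A)
  case 0
  then have A0: "A = (\<lambda>i j. 0)" by (auto simp: boxed_def intro!: ext)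
  show ?case by (rule exI[of _ "\<lambda>i j. 0"]) (simp add: A0 boxed_def mm_def ad_def)
next
  case (Suc m)
  define A' where "A' = (\<lambda>i j. if j < m then A i j else 0)"
  have bA': "boxed n m A'" using Suc.prems by (auto simp: boxed_def A'_def)
  from Suc.IH[OF bA'] obtain G' where bG': "boxed m n G'" and h1: "mm n (mm m A' G') A' = A'"
    and h2: "ad (mm m A' G') = mm m A' G'" by blast
  define Q where "Q = mm m A' G'"
  have bQ: "boxed n n Q" unfolding Q_def using bA' bG' by (rule boxed_mm)
  have QA: "mm m A G' = Q" by (auto simp: Q_def mm_def A'_def intro!: ext sum.cong)
  have QA': "mm n Q A' = A'" using h1 by (simp add: Q_def)
  have hQ: "ad Q = Q" using h2 by (simp add: Q_def)
  have QQ: "mm n Q Q = Q"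
  proof -
    have "mm n Q Q = mm m (mm n Q A') G'" by (simp add: Q_def mm_assoc)
    also have "\<dots> = Q" using QA' by (simp add: Q_def)
    finally show ?thesis .
  qed
  define va where "va = (\<lambda>i (j::nat). A i m)"
  define vc where "vc = (\<lambda>i j. va i j - mm n Q va i j)"
  have vc0: "vc i j = vc i 0" for i j by (simp add: vc_def va_def mm_def)
  have Qc: "mm n Q vc = (\<lambda>i j. 0)"
  proof -
    have "mm n Q (mm n Q va) = mm n Q va" by (simp add: QQ flip: mm_assoc)
    then show ?thesis unfolding vc_def mm_diff by simp
  qed
  have cQ: "mm n (ad vc) Q = (\<lambda>i j. 0)"
  proof -
    have "mm n (ad vc) Q = ad (mm n Q vc)" using hQ by (simp add: ad_mm)
    then show ?thesis using Qc by (simp add: ad_def)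
  qed
  have AQ: "mm n (ad A') Q = ad A'"
    using arg_cong[OF QA', of ad] hQ by (simp add: ad_mm)
  have cA: "mm n (ad vc) A' = (\<lambda>i j. 0)"
  proof -
    have "mm n (ad A') (mm n Q va) = mm n (ad A') va" by (simp add: AQ flip: mm_assoc)
    then have "mm n (ad A') vc = (\<lambda>i j. 0)" unfolding vc_def mm_diff by simp
    then have "ad (mm n (ad A') vc) = (\<lambda>i j. 0)" by (simp add: ad_def)
    then show ?thesis by (simp add: ad_mm)
  qed
  define s where "s = mm n (ad vc) vc 0 0"
  have s_va: "mm n (ad vc) va i j = s" for i j
  proof -
    have va_eq: "va = (\<lambda>i j. vc i j + mm n Q va i j)" by (simp add: vc_def)
    have "mm n (ad vc) va = (\<lambda>i j. mm n (ad vc) vc i j + mm n (ad vc) (mm n Q va) i j)"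
      by (subst va_eq) (simp add: mm_add)
    also have "mm n (ad vc) (mm n Q va) = (\<lambda>i j. 0)" by (simp add: cQ flip: mm_assoc) (simp add: mm_def)
    finally have "mm n (ad vc) va i j = mm n (ad vc) vc i j" by simp
    also have "\<dots> = s" unfolding s_def mm_def ad_def by (metis vc0)
    finally show ?thesis .
  qed
  have vc_out: "vc i j = 0" if "n \<le> i" for i j
    using that bQ Suc.prems by (auto simp: vc_def va_def mm_def boxed_def)
  have MQ: "mm n Q A i j = A i j" if "j < m" for i j
  proof -
    have "mm n Q A i j = mm n Q A' i j" using that by (simp add: mm_def A'_def)
    also have "\<dots> = A i j" using QA' that by (simp add: A'_def)
    finally show ?thesis .
  qed
  have Qva: "mm n Q A i m = A i m - vc i 0" for i
    by (simp add: vc_def va_def mm_def)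
  have Agt: "A i j = 0" if "Suc m \<le> j" for i j using Suc.prems that by (auto simp: boxed_def)
  show ?case
  proof (cases "\<forall>i. vc i 0 = 0")
    case True
    have AG: "mm (Suc m) A G' = Q"
      using bG' by (auto simp: mm_def boxed_def intro!: ext simp flip: QA)
    have "mm n Q A = A"
    proof (intro ext)
      fix i j
      show "mm n Q A i j = A i j"
      proof (cases "j < m")
        case True then show ?thesis by (rule MQ)
      next
        case False
        show ?thesis
        proof (cases "j = m")
          case True then show ?thesis using Qva \<open>\<forall>i. vc i 0 = 0\<close> by simp
        next
          case False
          then show ?thesis using \<open>\<not> j < m\<close> Agt by (simp add: mm_def)
        qed
      qed
    qed
    then show ?thesis using bG' hQ AG by (intro exI[of _ G']) (auto simp: boxed_def)
  next
    case False
    then obtain i0 where i0: "vc i0 0 \<noteq> 0" by blast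
    have i0n: "i0 < n" using vc_out[of i0 0] i0 by (cases "i0 < n") auto
    have s_sum: "s = (\<Sum>t<n. cnj (vc t 0) * vc t 0)" by (simp add: s_def mm_def ad_def)
    have s_real: "s = complex_of_real (\<Sum>t<n. (cmod (vc t 0))^2)"
      unfolding s_sum of_real_sum by (intro sum.cong refl) (simp add: complex_norm_square mult.commute del: of_real_power)
    have "(\<Sum>t<n. (cmod (vc t 0))^2) > 0"
      by (rule sum_pos2[of _ i0]) (use i0 i0n in auto)
    then have s0: "s \<noteq> 0" using s_real by (metis of_real_eq_0_iff order_less_irrefl)
    have cs: "cnj s = s" by (simp only: s_real complex_cnj_complex_of_real)
    define y where "y = (\<lambda>t. if t < m then -(\<Sum>l<n. G' t l * A l m) else if t = m then 1 else (0::complex))"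
    define G where "G = (\<lambda>i j. G' i j + y i * cnj (vc j 0) / s)"
    have bG: "boxed (Suc m) n G"
      using bG' vc_out by (auto simp: boxed_def G_def y_def)
    have Ay: "(\<Sum>t<Suc m. A i t * y t) = vc i 0" for i
    proof -
      have "(\<Sum>t<Suc m. A i t * y t) = (\<Sum>t<m. A i t * y t) + A i m"
        by (simp add: y_def)
      also have "(\<Sum>t<m. A i t * y t) = - (\<Sum>t<m. \<Sum>l<n. A i t * G' t l * A l m)"
        by (simp add: y_def sum_distrib_left sum_negf mult.assoc)
      also have "(\<Sum>t<m. \<Sum>l<n. A i t * G' t l * A l m) = mm n Q A i m"
        by (simp add: mm_def sum_distrib_right flip: QA) (rule sum.swap)
      finally show ?thesis using Qva[of i] by simp
    qed
    have AG: "mm (Suc m) A G = (\<lambda>i j. Q i j + vc i 0 * cnj (vc j 0) / s)"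
    proof (intro ext)
      fix i j
      have "mm (Suc m) A G i j = (\<Sum>t<Suc m. A i t * G' t j + (A i t * y t) * (cnj (vc j 0) / s))"
        unfolding mm_def G_def by (intro sum.cong refl) (simp add: algebra_simps)
      also have "\<dots> = (\<Sum>t<Suc m. A i t * G' t j) + (\<Sum>t<Suc m. A i t * y t) * (cnj (vc j 0) / s)"
        by (simp only: sum.distrib sum_distrib_right)
      also have "(\<Sum>t<Suc m. A i t * G' t j) = Q i j"
        using bG' by (simp add: boxed_def flip: QA) (simp add: mm_def)
      finally show "mm (Suc m) A G i j = Q i j + vc i 0 * cnj (vc j 0) / s" using Ay by simp
    qed
    have herm: "ad (mm (Suc m) A G) = mm (Suc m) A G"
    proof -
      have hQ': "cnj (Q j i) = Q i j" for i j using fun_cong[OF fun_cong[OF hQ, of i], of j] by (simp add: ad_def)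
      show ?thesis unfolding AG using hQ' cs by (auto simp: ad_def mult.commute intro!: ext)
    qed
    have cAj: "(\<Sum>t<n. cnj (vc t 0) * A t j) = (if j = m then s else 0)" for j
    proof -
      consider "j < m" | "j = m" | "m < j" by linarith
      then show ?thesis
      proof cases
        case 1
        have "(\<Sum>t<n. cnj (vc t 0) * A t j) = mm n (ad vc) A' 0 j"
          using 1 by (simp add: mm_def ad_def A'_def)
        then show ?thesis using cA 1 by simp
      next
        case 2
        have "(\<Sum>t<n. cnj (vc t 0) * A t j) = mm n (ad vc) va 0 0"
          using 2 by (simp add: mm_def ad_def va_def)
        then show ?thesis using s_va 2 by simp
      next
        case 3 then show ?thesis using Agt by simp
      qed
    qed
    have "mm n (mm (Suc m) A G) A = A"
    proof (intro ext)
      fix i j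
      have "mm n (mm (Suc m) A G) A i j = mm n Q A i j + vc i 0 / s * (\<Sum>t<n. cnj (vc t 0) * A t j)"
        unfolding AG by (simp add: mm_def distrib_right sum.distrib sum_distrib_left mult.assoc)
      also have "\<dots> = A i j"
      proof -
        consider "j < m" | "j = m" | "m < j" by linarith
        then show ?thesis
        proof cases
          case 1 then show ?thesis using MQ cAj by simp
        next
          case 2 then show ?thesis using Qva cAj s0 by simp
        next
          case 3 then show ?thesis using Agt cAj by (simp add: mm_def)
        qed
      qed
      finally show "mm n (mm (Suc m) A G) A i j = A i j" .
    qed
    then show ?thesis using bG herm by blast
  qed
qed



lemma mp_exists:
  assumes bA: "boxed n m A"
  shows "\<exists>P. boxed m n P \<and> mm n (mm m A P) A = A \<and> mm m (mm n P A) P = P \<and>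
     ad (mm m A P) = mm m A P \<and> ad (mm n P A) = mm n P A"
proof -
  obtain G where bG: "boxed m n G" and G1: "mm n (mm m A G) A = A" and G3: "ad (mm m A G) = mm m A G"
    using inv13[OF bA] by blast
  obtain H where bH: "boxed n m H" and H1: "mm m (mm n (ad A) H) (ad A) = ad A"
    and H3: "ad (mm n (ad A) H) = mm n (ad A) H"
    using inv13[OF boxed_ad[OF bA]] by blast
  define K where "K = ad H"
  have bK: "boxed m n K" unfolding K_def by (rule boxed_ad[OF bH])
  have K1: "mm n (mm m A K) A = A"
  proof -
    have "ad (mm m (mm n (ad A) H) (ad A)) = ad (ad A)" using H1 by simp
    then show ?thesis by (simp add: ad_mm K_def mm_assoc)
  qed
  have KA: "mm n K A = mm n (ad A) H"
    using H3 by (simp add: ad_mm K_def)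
  have K4: "ad (mm n K A) = mm n K A" using H3 KA by simp
  define P where "P = mm m (mm n K A) G"
  have AP: "mm m A P = mm m A G"
    unfolding P_def using K1 by (simp add: mm_assoc) (metis mm_assoc)
  have PA: "mm n P A = mm n K A"
    unfolding P_def using G1 by (simp add: mm_assoc)
  show ?thesis
  proof (intro exI conjI)
    show "boxed m n P" unfolding P_def by (rule boxed_mm[OF boxed_mm[OF bK bA] bG])
    show "mm n (mm m A P) A = A" using AP G1 by simp
    show "ad (mm m A P) = mm m A P" using AP G3 by simp
    show "ad (mm n P A) = mm n P A" using PA K4 by simp
    show "mm m (mm n P A) P = P"
    proof -
      have "mm m (mm n P A) P = mm m (mm n K A) (mm m (mm n K A) G)" by (simp only: PA) (simp add: P_def)
      also have "\<dots> = mm m (mm n K (mm m A (mm n K A))) G" by (simp add: mm_assoc)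
      also have "mm m A (mm n K A) = A" using K1 by (simp add: mm_assoc)
      finally show ?thesis by (simp add: P_def)
    qed
  qed
qed



locale tctx =
  fixes M Mi :: "complex mat" and n3 :: nat
  assumes M: "M \<in> carrier_mat n3 n3" and Mi: "Mi \<in> carrier_mat n3 n3"
    and MMi: "M * Mi = 1\<^sub>m n3" and MiM: "Mi * M = 1\<^sub>m n3"
begin

lemma dimM[simp]: "dim_row M = n3" using M by auto

lemma inv1: "k < n3 \<Longrightarrow> p < n3 \<Longrightarrow> (\<Sum>l<n3. M $$ (k,l) * Mi $$ (l,p)) = (if k = p then 1 else 0)"
proof -
  assume kp: "k < n3" "p < n3"
  have "(M * Mi) $$ (k,p) = (\<Sum>l<n3. M $$ (k,l) * Mi $$ (l,p))"
    using M Mi kp by (simp add: scalar_prod_def atLeast0LessThan)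
  then show ?thesis using MMi kp by simp
qed

lemma inv2: "k < n3 \<Longrightarrow> p < n3 \<Longrightarrow> (\<Sum>l<n3. Mi $$ (k,l) * M $$ (l,p)) = (if k = p then 1 else 0)"
proof -
  assume kp: "k < n3" "p < n3"
  have "(Mi * M) $$ (k,p) = (\<Sum>l<n3. Mi $$ (k,l) * M $$ (l,p))"
    using M Mi kp by (simp add: scalar_prod_def atLeast0LessThan)
  then show ?thesis using MiM kp by simp
qed

definition unhat :: "tensor \<Rightarrow> tensor" where
  "unhat F = (\<lambda>i j k. if k < n3 then (\<Sum>l<n3. Mi $$ (k,l) * F i j l) else 0)"

definition z3 :: "tensor \<Rightarrow> bool" where "z3 T \<longleftrightarrow> (\<forall>i j k. n3 \<le> k \<longrightarrow> T i j k = 0)"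

lemma z3_unhat: "z3 (unhat F)" by (simp add: z3_def unhat_def)

lemma hat_unhat: "k < n3 \<Longrightarrow> tensor_hat M (unhat F) i j k = F i j k"
proof -
  assume k: "k < n3"
  have "tensor_hat M (unhat F) i j k = (\<Sum>l<n3. \<Sum>p<n3. M $$ (k,l) * (Mi $$ (l,p) * F i j p))"
    using k by (simp add: tensor_hat_def unhat_def sum_distrib_left)
  also have "\<dots> = (\<Sum>p<n3. (\<Sum>l<n3. M $$ (k,l) * Mi $$ (l,p)) * F i j p)"
    by (subst sum.swap) (simp add: sum_distrib_right mult.assoc)
  also have "\<dots> = (\<Sum>p<n3. (if k = p then F i j p else 0))"
    using k by (intro sum.cong refl) (simp add: inv1)
  also have "\<dots> = F i j k" using k by simp
  finally show ?thesis .
qed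

lemma unhat_hat: "z3 T \<Longrightarrow> unhat (tensor_hat M T) = T"
proof (intro ext)
  fix i j k assume z: "z3 T"
  show "unhat (tensor_hat M T) i j k = T i j k"
  proof (cases "k < n3")
    case k: True
    have "unhat (tensor_hat M T) i j k = (\<Sum>l<n3. \<Sum>p<n3. Mi $$ (k,l) * (M $$ (l,p) * T i j p))"
      using k by (simp add: tensor_hat_def unhat_def sum_distrib_left)
    also have "\<dots> = (\<Sum>p<n3. (\<Sum>l<n3. Mi $$ (k,l) * M $$ (l,p)) * T i j p)"
      by (subst sum.swap) (simp add: sum_distrib_right mult.assoc)
    also have "\<dots> = (\<Sum>p<n3. (if k = p then T i j p else 0))"
      using k by (intro sum.cong refl) (simp add: inv2)
    also have "\<dots> = T i j k" using k by simp
    finally show ?thesis .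
  next
    case False then show ?thesis using z by (simp add: unhat_def z3_def)
  qed
qed

definition sl :: "tensor \<Rightarrow> nat \<Rightarrow> fm" where "sl T k = (\<lambda>i j. tensor_hat M T i j k)"

lemma tensor_eq: "z3 T \<Longrightarrow> z3 S \<Longrightarrow> (\<And>k. k < n3 \<Longrightarrow> sl T k = sl S k) \<Longrightarrow> T = S"
proof -
  assume zT: "z3 T" and zS: "z3 S" and h: "\<And>k. k < n3 \<Longrightarrow> sl T k = sl S k"
  have hh: "tensor_hat M T i j k = tensor_hat M S i j k" if "k < n3" for i j k
    using h[OF that] by (simp add: sl_def fun_eq_iff)
  have "unhat (tensor_hat M T) = unhat (tensor_hat M S)"
    unfolding unhat_def
  proof (intro ext)
    fix i j k
    show "(if k < n3 then \<Sum>l<n3. Mi $$ (k, l) * tensor_hat M T i j l else 0) =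
          (if k < n3 then \<Sum>l<n3. Mi $$ (k, l) * tensor_hat M S i j l else 0)"
      using hh by (auto intro!: sum.cong)
  qed
  then show ?thesis using unhat_hat zT zS by simp
qed

lemma mprod_char: "mprod M n C D = unhat (\<lambda>i j k. \<Sum>t<n. tensor_hat M C i t k * tensor_hat M D t j k)"
  unfolding mprod_def
proof (rule the_equality)
  let ?F = "(\<lambda>i j k. \<Sum>t<n. tensor_hat M C i t k * tensor_hat M D t j k)"
  show "(\<forall>i j k. dim_row M \<le> k \<longrightarrow> unhat ?F i j k = 0) \<and>
    (\<forall>i j k. k < dim_row M \<longrightarrow> tensor_hat M (unhat ?F) i j k = ?F i j k)"
    by (simp add: hat_unhat z3_unhat[unfolded z3_def])
  fix W assume W: "(\<forall>i j k. dim_row M \<le> k \<longrightarrow> W i j k = 0) \<and>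
    (\<forall>i j k. k < dim_row M \<longrightarrow> tensor_hat M W i j k = ?F i j k)"
  show "W = unhat ?F"
    by (rule tensor_eq) (use W in \<open>auto simp: z3_def z3_unhat[unfolded z3_def] sl_def hat_unhat intro!: ext\<close>)
qed

lemma tconj_char: "tconj M A = unhat (\<lambda>i j k. cnj (tensor_hat M A j i k))"
  unfolding tconj_def
proof (rule the_equality)
  let ?F = "(\<lambda>i j k. cnj (tensor_hat M A j i k))"
  show "(\<forall>i j k. dim_row M \<le> k \<longrightarrow> unhat ?F i j k = 0) \<and>
    (\<forall>i j k. k < dim_row M \<longrightarrow> tensor_hat M (unhat ?F) i j k = cnj (tensor_hat M A j i k))"
    by (simp add: hat_unhat z3_unhat[unfolded z3_def])
  fix W assume W: "(\<forall>i j k. dim_row M \<le> k \<longrightarrow> W i j k = 0) \<and>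
    (\<forall>i j k. k < dim_row M \<longrightarrow> tensor_hat M W i j k = cnj (tensor_hat M A j i k))"
  show "W = unhat ?F"
    by (rule tensor_eq) (use W in \<open>auto simp: z3_def z3_unhat[unfolded z3_def] sl_def hat_unhat intro!: ext\<close>)
qed

lemma z3_mprod: "z3 (mprod M n C D)" by (simp add: mprod_char z3_unhat)
lemma z3_tconj: "z3 (tconj M A)" by (simp add: tconj_char z3_unhat)

lemma sl_mprod: "k < n3 \<Longrightarrow> sl (mprod M n C D) k = mm n (sl C k) (sl D k)"
  by (simp add: mprod_char sl_def hat_unhat mm_def)
lemma sl_tconj: "k < n3 \<Longrightarrow> sl (tconj M A) k = ad (sl A k)"
  by (simp add: tconj_char sl_def hat_unhat ad_def)

lemma mprod_assoc: "mprod M l (mprod M k A B) C = mprod M k A (mprod M l B C)"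
  by (rule tensor_eq) (simp_all add: z3_mprod sl_mprod mm_assoc)

lemma tconj_mprod: "tconj M (mprod M k C D) = mprod M k (tconj M D) (tconj M C)"
  by (rule tensor_eq) (simp_all add: z3_mprod z3_tconj sl_mprod sl_tconj ad_mm)

lemma tin_z3: "tensor_in a b n3 T \<Longrightarrow> z3 T" by (simp add: tensor_in_def z3_def)

lemma tin_boxed: "tensor_in a b n3 T \<Longrightarrow> boxed a b (sl T k)"
  by (auto simp: tensor_in_def boxed_def sl_def tensor_hat_def)

end


context tctx begin

lemma mp_tensor_exists:
  assumes A: "tensor_in n1 n2 n3 A"
  shows "\<exists>W. tensor_in n2 n1 n3 W \<and> mprod M n1 (mprod M n2 A W) A = A \<and>
      mprod M n2 (mprod M n1 W A) W = W \<and>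
      tconj M (mprod M n2 A W) = mprod M n2 A W \<and>
      tconj M (mprod M n1 W A) = mprod M n1 W A"
proof -
  define Pk where "Pk k = (SOME P. boxed n2 n1 P \<and> mm n1 (mm n2 (sl A k) P) (sl A k) = sl A k \<and>
     mm n2 (mm n1 P (sl A k)) P = P \<and> ad (mm n2 (sl A k) P) = mm n2 (sl A k) P \<and>
     ad (mm n1 P (sl A k)) = mm n1 P (sl A k))" for k
  have Pk: "boxed n2 n1 (Pk k) \<and> mm n1 (mm n2 (sl A k) (Pk k)) (sl A k) = sl A k \<and>
     mm n2 (mm n1 (Pk k) (sl A k)) (Pk k) = Pk k \<and> ad (mm n2 (sl A k) (Pk k)) = mm n2 (sl A k) (Pk k) \<and>
     ad (mm n1 (Pk k) (sl A k)) = mm n1 (Pk k) (sl A k)" for k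
    unfolding Pk_def by (rule someI_ex[OF mp_exists[OF tin_boxed[OF A]]])
  define W where "W = unhat (\<lambda>i j k. Pk k i j)"
  have slW: "sl W k = Pk k" if "k < n3" for k
    using that by (simp add: W_def sl_def hat_unhat)
  have zA: "z3 A" by (rule tin_z3[OF A])
  have tW: "tensor_in n2 n1 n3 W"
    unfolding tensor_in_def
  proof (intro allI impI)
    fix i j k assume h: "n2 \<le> i \<or> n1 \<le> j \<or> n3 \<le> k"
    have "Pk l i j = 0" if "n2 \<le> i \<or> n1 \<le> j" for l using Pk[of l] that by (auto simp: boxed_def)
    then show "W i j k = 0" using h by (auto simp: W_def unhat_def)
  qed
  show ?thesis
  proof (intro exI conjI)
    show "tensor_in n2 n1 n3 W" by fact
    show "mprod M n1 (mprod M n2 A W) A = A"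
      by (rule tensor_eq) (use Pk zA in \<open>simp_all add: z3_mprod sl_mprod slW\<close>)
    show "mprod M n2 (mprod M n1 W A) W = W"
      by (rule tensor_eq) (use Pk zA tW in \<open>simp_all add: z3_mprod sl_mprod slW tin_z3\<close>)
    show "tconj M (mprod M n2 A W) = mprod M n2 A W"
      by (rule tensor_eq) (use Pk in \<open>simp_all add: z3_mprod z3_tconj sl_mprod sl_tconj slW\<close>)
    show "tconj M (mprod M n1 W A) = mprod M n1 W A"
      by (rule tensor_eq) (use Pk in \<open>simp_all add: z3_mprod z3_tconj sl_mprod sl_tconj slW\<close>)
  qed
qed

lemma mp_unique:
  assumes a1: "mprod M n1 (mprod M n2 A W1) A = A" and a2: "mprod M n2 (mprod M n1 W1 A) W1 = W1"
   and a3: "tconj M (mprod M n2 A W1) = mprod M n2 A W1" and a4: "tconj M (mprod M n1 W1 A) = mprod M n1 W1 A"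
   and b1: "mprod M n1 (mprod M n2 A W2) A = A" and b2: "mprod M n2 (mprod M n1 W2 A) W2 = W2"
   and b3: "tconj M (mprod M n2 A W2) = mprod M n2 A W2" and b4: "tconj M (mprod M n1 W2 A) = mprod M n1 W2 A"
  shows "W1 = W2"
proof -
  let ?T = "tconj M" and ?p = "mprod M"
  have L2: "?p n1 (?T A) (?p n2 A W2) = ?T A"
    using arg_cong[OF b1, of ?T] b3 by (simp add: tconj_mprod)
  have L1: "?p n2 (?p n1 W1 A) (?T A) = ?T A"
  proof -
    have "?T A = ?T (?p n2 A (?p n1 W1 A))" using a1 by (simp add: mprod_assoc)
    also have "\<dots> = ?p n2 (?T (?p n1 W1 A)) (?T A)" by (rule tconj_mprod)
    also have "\<dots> = ?p n2 (?p n1 W1 A) (?T A)" by (simp only: a4)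
    finally show ?thesis by simp
  qed
  have e1: "W1 = ?p n2 (?p n1 W1 (?T W1)) (?T A)"
  proof -
    have "W1 = ?p n1 W1 (?p n2 A W1)" using a2 by (simp add: mprod_assoc)
    also have "\<dots> = ?p n1 W1 (?T (?p n2 A W1))" using a3 by simp
    finally show ?thesis by (simp add: tconj_mprod mprod_assoc)
  qed
  have Z1: "W1 = ?p n1 W1 (?p n2 A W2)"
  proof -
    have "W1 = ?p n2 (?p n1 W1 (?T W1)) (?p n1 (?T A) (?p n2 A W2))" using e1 L2 by simp
    also have "\<dots> = ?p n1 (?p n2 (?p n1 W1 (?T W1)) (?T A)) (?p n2 A W2)" by (simp add: mprod_assoc)
    also have "\<dots> = ?p n1 W1 (?p n2 A W2)" using e1 by simp
    finally show ?thesis .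
  qed
  have e2: "W2 = ?p n1 (?T A) (?p n2 (?T W2) W2)"
  proof -
    have "W2 = ?p n2 (?T (?p n1 W2 A)) W2" using b2 b4 by simp
    then show ?thesis by (simp add: tconj_mprod mprod_assoc)
  qed
  have Z2: "W2 = ?p n1 W1 (?p n2 A W2)"
  proof -
    have "W2 = ?p n1 (?p n2 (?p n1 W1 A) (?T A)) (?p n2 (?T W2) W2)" using e2 L1 by simp
    also have "\<dots> = ?p n2 (?p n1 W1 A) (?p n1 (?T A) (?p n2 (?T W2) W2))" by (simp add: mprod_assoc)
    also have "\<dots> = ?p n2 (?p n1 W1 A) W2" using e2 by simp
    finally show ?thesis by (simp add: mprod_assoc)
  qed
  show ?thesis using Z1 Z2 by simp
qed

end


theorem theorem3p13:
  fixes M :: "complex mat" and n1 n2 n3 :: nat and A Am X :: tensor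
  assumes M: "M \<in> carrier_mat n3 n3" and Minv: "invertible_mat M"
    and A: "tensor_in n1 n2 n3 A"
    and Am: "Am \<in> inner1 M n1 n2 A"
    and X: "tensor_in n2 n1 n3 X"
  defines "Ad \<equiv> mp_inv M n1 n2 A"
  shows
   "((X = mprod M n2 (mprod M n1 Am A) (tconj M A))
    \<longleftrightarrow> (mprod M n2 (mprod M n1 X A) Ad = X \<and>
         mprod M n1 X (tconj M Ad) = mprod M n1 Am A))
    \<and>
   ((X = mprod M n2 (mprod M n1 Am A) (tconj M A))
    \<longleftrightarrow> (mprod M n2 (mprod M n1 X A) Ad = X \<and>
         mprod M n1 X A = mprod M n1 (mprod M n2 (mprod M n1 Am A) (tconj M A)) A))
    \<and>
   ((X = mprod M n2 (mprod M n1 Am A) (tconj M A))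
    \<longleftrightarrow> (mprod M n2 (mprod M n1 (mprod M n2 (mprod M n1 Am A) X) A) Ad = X \<and>
         mprod M n1 (mprod M n2 A X) (tconj M Ad) = A))"
proof -
  from Minv obtain Mi where i1': "inverts_mat M Mi" and i2': "inverts_mat Mi M"
    unfolding invertible_mat_def by blast
  have dM: "dim_row M = n3" using M by blast
  have i1: "M * Mi = 1\<^sub>m n3" using i1' dM unfolding inverts_mat_def by simp
  have i2: "Mi * M = 1\<^sub>m (dim_row Mi)" using i2' unfolding inverts_mat_def by simp
  have c1: "dim_col Mi = n3" using arg_cong[OF i1, of dim_col] by (metis index_mult_mat(3) index_one_mat(3))
  have r1: "dim_row Mi = n3" using arg_cong[OF i2, of dim_col] M by (metis carrier_matD(2) index_mult_mat(3) index_one_mat(3))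
  have Mi: "Mi \<in> carrier_mat n3 n3" by (rule carrier_matI[OF r1 c1])
  have i3: "Mi * M = 1\<^sub>m n3" by (simp only: i2 r1)
  interpret tctx M Mi n3 by (rule tctx.intro[OF M Mi i1 i3])
  let ?T = "tconj M" and ?p = "mprod M"
  obtain W where W: "tensor_in n2 n1 n3 W" and w1: "?p n1 (?p n2 A W) A = A"
    and w2: "?p n2 (?p n1 W A) W = W" and w3: "?T (?p n2 A W) = ?p n2 A W"
    and w4: "?T (?p n1 W A) = ?p n1 W A"
    using mp_tensor_exists[OF A] by blast
  have AdW: "Ad = W" unfolding Ad_def mp_inv_def dimM
  proof (rule the_equality)
    show "tensor_in n2 n1 n3 W \<and> ?p n1 (?p n2 A W) A = A \<and> ?p n2 (?p n1 W A) W = W \<and>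
      ?T (?p n2 A W) = ?p n2 A W \<and> ?T (?p n1 W A) = ?p n1 W A" using W w1 w2 w3 w4 by blast
    fix V assume "tensor_in n2 n1 n3 V \<and> ?p n1 (?p n2 A V) A = A \<and> ?p n2 (?p n1 V A) V = V \<and>
      ?T (?p n2 A V) = ?p n2 A V \<and> ?T (?p n1 V A) = ?p n1 V A"
    then show "V = W" using mp_unique[of n1 n2 A V W] w1 w2 w3 w4 by (elim conjE) simp
  qed
  have P1: "?p n1 (?p n2 A Ad) A = A" and P3: "?T (?p n2 A Ad) = ?p n2 A Ad"
    and P4: "?T (?p n1 Ad A) = ?p n1 Ad A"
    using w1 w3 w4 AdW by auto
  have AG: "?p n1 (?p n2 A Am) A = A" using Am by (simp add: inner1_def)
  define G where "G = Am"
  have AGx: "?p n2 A (?p n1 G (?p n2 A Z)) = ?p n2 A Z" for Z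
  proof -
    have "?p n2 A (?p n1 G (?p n2 A Z)) = ?p n2 (?p n1 (?p n2 A G) A) Z" by (simp add: mprod_assoc)
    then show ?thesis using AG by (simp add: G_def)
  qed
  have AG': "?p n2 A (?p n1 G A) = A" using AG by (simp add: mprod_assoc G_def)
  have P1': "?p n2 A (?p n1 Ad A) = A" using P1 by (simp add: mprod_assoc)
  have K1: "?p n1 (?T A) (?p n2 A Ad) = ?T A"
    using arg_cong[OF P1, of ?T] P3 by (simp add: tconj_mprod)
  have K2: "?p n1 (?T A) (?T Ad) = ?p n1 Ad A"
    using P4 by (simp add: tconj_mprod)
  have K3: "?p n2 A Ad = ?p n2 (?T Ad) (?T A)"
    using P3 by (simp add: tconj_mprod)
  define Y where "Y = ?p n2 (?p n1 G A) (?T A)"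
  have Yb1: "?p n2 (?p n1 Y A) Ad = Y" unfolding Y_def by (simp add: mprod_assoc K1)
  have Yb2: "?p n1 Y (?T Ad) = ?p n1 G A" unfolding Y_def by (simp add: mprod_assoc K2 P1')
  have Yd1: "?p n2 (?p n1 (?p n2 (?p n1 G A) Y) A) Ad = Y" unfolding Y_def
    by (simp add: mprod_assoc K1 AGx)
  have Yd2: "?p n1 (?p n2 A Y) (?T Ad) = A" unfolding Y_def
    by (simp add: mprod_assoc K2 P1' AG')
  have ba: "X = Y" if h1: "?p n2 (?p n1 X A) Ad = X" and h2: "?p n1 X (?T Ad) = ?p n1 G A"
  proof -
    have "X = ?p n1 X (?p n2 A Ad)" using h1 by (simp add: mprod_assoc)
    also have "\<dots> = ?p n2 (?p n1 X (?T Ad)) (?T A)" by (simp add: K3 mprod_assoc)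
    also have "\<dots> = Y" by (simp add: h2 Y_def)
    finally show ?thesis .
  qed
  have ca: "X = Y" if h1: "?p n2 (?p n1 X A) Ad = X" and h2: "?p n1 X A = ?p n1 Y A"
    using h1 h2 Yb1 by simp
  have da: "X = Y" if h1: "?p n2 (?p n1 (?p n2 (?p n1 G A) X) A) Ad = X"
    and h2: "?p n1 (?p n2 A X) (?T Ad) = A"
  proof -
    have "X = ?p n1 G (?p n2 A (?p n1 X (?p n2 A Ad)))" using h1 by (simp add: mprod_assoc)
    also have "\<dots> = ?p n1 G (?p n2 (?p n1 (?p n2 A X) (?T Ad)) (?T A))" by (simp add: K3 mprod_assoc)
    also have "\<dots> = Y" by (simp only: h2) (simp add: Y_def mprod_assoc)
    finally show ?thesis .
  qed
  have e1: "(X = Y) \<longleftrightarrow> (?p n2 (?p n1 X A) Ad = X \<and> ?p n1 X (?T Ad) = ?p n1 G A)"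
    using ba Yb1 Yb2 by blast
  have e2: "(X = Y) \<longleftrightarrow> (?p n2 (?p n1 X A) Ad = X \<and> ?p n1 X A = ?p n1 Y A)"
    using ca Yb1 by blast
  have e3: "(X = Y) \<longleftrightarrow> (?p n2 (?p n1 (?p n2 (?p n1 G A) X) A) Ad = X \<and> ?p n1 (?p n2 A X) (?T Ad) = A)"
    using da Yd1 Yd2 by blast
  show ?thesis
    unfolding G_def[symmetric] Y_def[symmetric]
    by (intro conjI) (fact e1, fact e2, fact e3)
qed

end
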